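(* Let $B\subseteq C(n,p)$ be finite and $e\ge1$. Then $(I_B)^{[p^e]}=I_{B^{[p^e]}}$, where $B^{[p^e]}=\bigsqcup_{d\ge0}\{c^{p^e}: c\in B_d\}$ and, for $c=(c_1,\dots,c_M)\in C(d,n,p)$, $c^{p^e}=(0,\dots,0,c_1,\dots,c_M)$ ($e$ zeros) $\in C(dp^e,n,p)$. In particular $(I_{c,d})^{[p^e]}=I_{c^{p^e},dp^e}$.
   Context: $\mathbf k$ is algebraically closed of characteristic $p>0$, $S=\mathbf k[x_1,\dots,x_n]$. For an ideal $I=\langle f_1,\dots,f_r\rangle$, its Frobenius power is $I^{[p^e]}=\langle f_1^{p^e},\dots,f_r^{p^e}\rangle$. Base-$p$ expansion: $a=\sum_ja_jp^j$ with $0\le a_j\le p-1$; for $d\ge1$, $M=\max\{j:d_j\ne0\}$. The carry pattern of a degree-$d$ monomial $x_1^{b_1}\cdots x_n^{b_n}$ (with $b_{i,j}$ the base-$p$ digits of $b_i$) is $(c_1,\dots,c_M)$ defined by $\sum_{i}\sum_{j<\ell}b_{i,j}p^j=c_\ell p^\ell+\sum_{j<\ell}d_jp^j$, $1\le\ell\le M$. $C(d,n,p)$ is the set of such carry patterns, ordered componentwise, $C(n,p)=\bigsqcup_dC(d,n,p)$, $B_d=B\cap C(d,n,p)$. $I_{c,d}$ is the ideal generated by the degree-$d$ monomials with carry pattern $\le c$, and $I_B=\sum_d\sum_{c\in B_d}I_{c,d}$. *)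

theory Defs
  imports "HOL-Library.Poly_Mapping" "HOL-Computational_Algebra.Polynomial"
begin

text \<open>Polynomials over 'k in the variables x_0, x_1, ...: an exponent vector is a
  finitely supported function nat =>0 nat, a polynomial a finitely supported map
  from exponent vectors to coefficients (convolution product).  The ring
  S = k[x_1,...,x_n] is the set of polynomials involving only the variables with index < n.\<close>

type_synonym 'k mpoly = "(nat \<Rightarrow>\<^sub>0 nat) \<Rightarrow>\<^sub>0 'k"

definition polyring :: "nat \<Rightarrow> 'k::comm_ring_1 mpoly set" where
  "polyring n = {f. \<forall>b \<in> Poly_Mapping.keys f. Poly_Mapping.keys b \<subseteq> {..<n}}"

definition monom :: "(nat \<Rightarrow>\<^sub>0 nat) \<Rightarrow> 'k::comm_ring_1 mpoly" where
  "monom b = Poly_Mapping.single b 1"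

definition ideal_gen :: "nat \<Rightarrow> 'k::comm_ring_1 mpoly set \<Rightarrow> 'k mpoly set" where
  "ideal_gen n G = {f. \<exists>F h. finite F \<and> F \<subseteq> G \<and> (\<forall>g\<in>F. h g \<in> polyring n)
                          \<and> f = (\<Sum>g\<in>F. h g * g)}"

text \<open>Frobenius power: generated by the q-th powers of (generators of) I;
  we take all elements of I as generators (independent of the generating set).\<close>
definition frob_power :: "nat \<Rightarrow> 'k::comm_ring_1 mpoly set \<Rightarrow> nat \<Rightarrow> 'k mpoly set" where
  "frob_power n I q = ideal_gen n {f ^ q | f. f \<in> I}"

definition digit :: "nat \<Rightarrow> nat \<Rightarrow> nat \<Rightarrow> nat" where
  "digit p a j = a div p ^ j mod p"

definition topdig :: "nat \<Rightarrow> nat \<Rightarrow> nat" where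
  "topdig p d = (if d = 0 then 0 else Max {j. digit p d j \<noteq> 0})"

definition deg_monos :: "nat \<Rightarrow> nat \<Rightarrow> (nat \<Rightarrow>\<^sub>0 nat) set" where
  "deg_monos d n = {b. Poly_Mapping.keys b \<subseteq> {..<n} \<and> (\<Sum>i<n. Poly_Mapping.lookup b i) = d}"

text \<open>Carry pattern (c_1,...,c_M) of a degree-d monomial b, encoded as a function
  nat => nat which is c_l for 1 \<le> l \<le> M and 0 elsewhere.  c_l is determined by
  sum_i sum_{j<l} b_{i,j} p^j = c_l p^l + sum_{j<l} d_j p^j.\<close>
definition carry :: "nat \<Rightarrow> nat \<Rightarrow> nat \<Rightarrow> (nat \<Rightarrow>\<^sub>0 nat) \<Rightarrow> nat \<Rightarrow> nat" where
  "carry p n d b l =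
     (if 1 \<le> l \<and> l \<le> topdig p d then
        ((\<Sum>i<n. \<Sum>j<l. digit p (Poly_Mapping.lookup b i) j * p ^ j) - (\<Sum>j<l. digit p d j * p ^ j)) div p ^ l
      else 0)"

definition carry_set :: "nat \<Rightarrow> nat \<Rightarrow> nat \<Rightarrow> (nat \<Rightarrow> nat) set" where
  "carry_set d n p = carry p n d ` deg_monos d n"

text \<open>C(n,p) as a disjoint union: pairs (d, c) with c \<in> C(d,n,p).\<close>
definition carry_all :: "nat \<Rightarrow> nat \<Rightarrow> (nat \<times> (nat \<Rightarrow> nat)) set" where
  "carry_all n p = {(d, c). c \<in> carry_set d n p}"

definition carry_le :: "nat \<Rightarrow> nat \<Rightarrow> (nat \<Rightarrow> nat) \<Rightarrow> (nat \<Rightarrow> nat) \<Rightarrow> bool" where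
  "carry_le p d c c' = (\<forall>l. 1 \<le> l \<and> l \<le> topdig p d \<longrightarrow> c l \<le> c' l)"

definition I_cd :: "nat \<Rightarrow> nat \<Rightarrow> (nat \<Rightarrow> nat) \<Rightarrow> nat \<Rightarrow> 'k::comm_ring_1 mpoly set" where
  "I_cd n p c d = ideal_gen n (monom ` {b \<in> deg_monos d n. carry_le p d (carry p n d b) c})"

text \<open>I_B = sum over (d,c) \<in> B of I_{c,d} (sum of ideals = ideal generated by the union).\<close>
definition I_B :: "nat \<Rightarrow> nat \<Rightarrow> (nat \<times> (nat \<Rightarrow> nat)) set \<Rightarrow> 'k::comm_ring_1 mpoly set" where
  "I_B n p B = ideal_gen n (\<Union>(d, c) \<in> B. I_cd n p c d)"

definition carry_frob :: "nat \<Rightarrow> (nat \<Rightarrow> nat) \<Rightarrow> nat \<Rightarrow> nat" where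
  "carry_frob e c l = (if l \<le> e then 0 else c (l - e))"

definition frob_set :: "nat \<Rightarrow> nat \<Rightarrow> (nat \<times> (nat \<Rightarrow> nat)) set \<Rightarrow> (nat \<times> (nat \<Rightarrow> nat)) set" where
  "frob_set p e B = (\<lambda>(d, c). (d * p ^ e, carry_frob e c)) ` B"

end

theory Submission
  imports Defs "HOL-Computational_Algebra.Primes"
begin


lemma keys_add_sub: "Poly_Mapping.keys (a + b) \<subseteq> Poly_Mapping.keys a \<union> Poly_Mapping.keys (b::nat \<Rightarrow>\<^sub>0 nat)"
  by (rule keys_add)

lemma polyring_mult:
  assumes "f \<in> polyring n" "g \<in> polyring n"
  shows "f * g \<in> polyring n"
  unfolding polyring_def
proof (intro CollectI ballI)
  fix b assume "b \<in> Poly_Mapping.keys (f * g)"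
  then obtain a c where "b = a + c" "a \<in> Poly_Mapping.keys f" "c \<in> Poly_Mapping.keys g"
    using keys_mult by blast
  then show "Poly_Mapping.keys b \<subseteq> {..<n}"
    using assms keys_add[of a c] unfolding polyring_def by blast
qed

lemma polyring_add:
  assumes "f \<in> polyring n" "g \<in> polyring n"
  shows "f + g \<in> polyring n"
  using assms keys_add[of f g] unfolding polyring_def by blast

lemma polyring_zero: "0 \<in> polyring n"
  unfolding polyring_def by simp

lemma polyring_one: "1 \<in> polyring n"
  unfolding polyring_def by simp

lemma polyring_power: "f \<in> polyring n \<Longrightarrow> f ^ k \<in> polyring n"
  by (induction k) (auto intro: polyring_mult polyring_one)

lemma polyring_sum: "(\<And>x. x \<in> A \<Longrightarrow> f x \<in> polyring n) \<Longrightarrow> sum f A \<in> polyring n"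
  by (induction A rule: infinite_finite_induct) (auto intro: polyring_add polyring_zero)

lemma ideal_gen_zero: "0 \<in> ideal_gen n G"
  unfolding ideal_gen_def by (rule CollectI, rule exI[of _ "{}"]) auto

lemma ideal_gen_base: "g \<in> G \<Longrightarrow> g \<in> ideal_gen n G"
  unfolding ideal_gen_def
  by (rule CollectI, rule exI[of _ "{g}"], rule exI[of _ "\<lambda>_. 1"]) (auto intro: polyring_one)

lemma ideal_gen_add:
  assumes "f \<in> ideal_gen n G" "f' \<in> ideal_gen n G"
  shows "f + f' \<in> ideal_gen n G"
proof -
  obtain F1 h1 where 1: "finite F1" "F1 \<subseteq> G" "\<forall>g\<in>F1. h1 g \<in> polyring n" "f = (\<Sum>g\<in>F1. h1 g * g)"
    using assms(1) unfolding ideal_gen_def by blast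
  obtain F2 h2 where 2: "finite F2" "F2 \<subseteq> G" "\<forall>g\<in>F2. h2 g \<in> polyring n" "f' = (\<Sum>g\<in>F2. h2 g * g)"
    using assms(2) unfolding ideal_gen_def by blast
  define h where "h g = (if g \<in> F1 then h1 g else 0) + (if g \<in> F2 then h2 g else 0)" for g
  have "(\<Sum>g\<in>F1\<union>F2. h g * g) = (\<Sum>g\<in>F1\<union>F2. if g \<in> F1 then h1 g * g else 0) + (\<Sum>g\<in>F1\<union>F2. if g \<in> F2 then h2 g * g else 0)"
    unfolding sum.distrib[symmetric] by (rule sum.cong) (auto simp: h_def distrib_right)
  also have "\<dots> = f + f'"
  proof -
    have a: "{g \<in> F1 \<union> F2. g \<in> F1} = F1" "{g \<in> F1 \<union> F2. g \<in> F2} = F2" by auto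
    show ?thesis
      unfolding sum.inter_filter[OF finite_UnI[OF 1(1) 2(1)], symmetric] a 1(4) 2(4) ..
  qed
  finally show ?thesis
    unfolding ideal_gen_def using 1 2
    by (intro CollectI exI[of _ "F1 \<union> F2"] exI[of _ h])
       (auto simp: h_def intro!: polyring_add polyring_zero)
qed

lemma ideal_gen_mult:
  assumes "f \<in> ideal_gen n G" "h \<in> polyring n"
  shows "h * f \<in> ideal_gen n G"
proof -
  obtain F1 h1 where 1: "finite F1" "F1 \<subseteq> G" "\<forall>g\<in>F1. h1 g \<in> polyring n" "f = (\<Sum>g\<in>F1. h1 g * g)"
    using assms(1) unfolding ideal_gen_def by blast
  have "h * f = (\<Sum>g\<in>F1. (h * h1 g) * g)" using 1 by (simp add: sum_distrib_left mult.assoc)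
  then show ?thesis unfolding ideal_gen_def using 1 assms
    by (intro CollectI exI[of _ F1] exI[of _ "\<lambda>g. h * h1 g"]) (auto intro: polyring_mult)
qed

lemma ideal_gen_sum:
  "(\<And>x. x \<in> A \<Longrightarrow> f x \<in> ideal_gen n G) \<Longrightarrow> sum f A \<in> ideal_gen n G"
  by (induction A rule: infinite_finite_induct) (auto intro: ideal_gen_add ideal_gen_zero)

lemma ideal_gen_sub:
  assumes "G1 \<subseteq> ideal_gen n G2"
  shows "ideal_gen n G1 \<subseteq> ideal_gen n G2"
proof
  fix f assume "f \<in> ideal_gen n G1"
  then obtain F1 h1 where 1: "finite F1" "F1 \<subseteq> G1" "\<forall>g\<in>F1. h1 g \<in> polyring n" "f = (\<Sum>g\<in>F1. h1 g * g)"
    unfolding ideal_gen_def by blast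
  show "f \<in> ideal_gen n G2" unfolding 1(4)
    by (rule ideal_gen_sum) (use 1 assms in \<open>auto intro: ideal_gen_mult\<close>)
qed

lemma ideal_gen_polyring:
  assumes "G \<subseteq> polyring n" shows "ideal_gen n G \<subseteq> polyring n"
  using assms unfolding ideal_gen_def by (auto intro!: polyring_sum polyring_mult)

lemma frob_prime:
  fixes x y :: "'a::comm_ring_1"
  assumes "prime p" "of_nat p = (0::'a)"
  shows "(x + y) ^ p = x ^ p + y ^ p"
proof -
  have p0: "p > 0" using assms prime_gt_0_nat by blast
  have "(x + y) ^ p = (\<Sum>k\<le>p. of_nat (p choose k) * x ^ k * y ^ (p - k))"
    by (rule binomial_ring)
  also have "\<dots> = (\<Sum>k\<in>{0,p}. of_nat (p choose k) * x ^ k * y ^ (p - k))"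
  proof (rule sum.mono_neutral_right)
    show "\<forall>k\<in>{..p} - {0, p}. of_nat (p choose k) * x ^ k * y ^ (p - k) = 0"
    proof
      fix k assume k: "k \<in> {..p} - {0, p}"
      then have "p dvd (p choose k)" using assms(1) p0 by (intro dvd_choose_prime) auto
      then obtain m where "p choose k = p * m" by blast
      then have "of_nat (p choose k) = (0::'a)" using assms(2) by simp
      then show "of_nat (p choose k) * x ^ k * y ^ (p - k) = 0" by simp
    qed
  qed (use p0 in auto)
  also have "\<dots> = x ^ p + y ^ p" using p0 by (simp add: add.commute)
  finally show ?thesis .
qed

lemma frob_pow:
  fixes x y :: "'a::comm_ring_1"
  assumes "prime p" "of_nat p = (0::'a)"
  shows "(x + y) ^ (p ^ e) = x ^ (p ^ e) + y ^ (p ^ e)"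
proof (induction e)
  case (Suc e)
  have "(x + y) ^ (p ^ Suc e) = ((x + y) ^ (p ^ e)) ^ p" by (simp add: power_mult[symmetric] mult.commute)
  also have "\<dots> = (x ^ (p ^ e)) ^ p + (y ^ (p ^ e)) ^ p" using Suc frob_prime[OF assms] by simp
  also have "\<dots> = x ^ (p ^ Suc e) + y ^ (p ^ Suc e)" by (simp add: power_mult[symmetric] mult.commute)
  finally show ?case .
qed simp

lemma frob_sum:
  fixes f :: "'b \<Rightarrow> 'a::comm_ring_1"
  assumes "prime p" "of_nat p = (0::'a)"
  shows "(sum f A) ^ (p ^ e) = (\<Sum>x\<in>A. f x ^ (p ^ e))"
proof (induction A rule: infinite_finite_induct)
  case (empty) show ?case using assms prime_gt_0_nat by (simp add: zero_power)
next
  case (infinite A) show ?case using assms prime_gt_0_nat infinite by (simp add: zero_power)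
next
  case (insert x F) then show ?case using frob_pow[OF assms] by simp
qed



lemma digit_sum: "(\<Sum>j<l. digit p a j * p ^ j) = a mod p ^ l"
proof (induction l)
  case (Suc l)
  have "a mod p ^ Suc l = p ^ l * (a div p ^ l mod p) + a mod p ^ l"
    using mod_mult2_eq[of a "p ^ l" p] by (simp add: mult.commute)
  then show ?case using Suc by (simp add: digit_def mult.commute)
qed simp

lemma digit_scale_high: "p > 0 \<Longrightarrow> digit p (d * p ^ e) (j + e) = digit p d j"
  unfolding digit_def by (simp add: power_add div_mult_mult2)

lemma digit_scale_low:
  assumes "p > 0" "j < e" shows "digit p (d * p ^ e) j = 0"
proof -
  have "p ^ e = p ^ j * (p * p ^ (e - j - 1))"
    using assms by (simp flip: power_add power_Suc)
  then have "d * p ^ e div p ^ j = p * (d * p ^ (e - j - 1))"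
    using assms by simp
  then show ?thesis unfolding digit_def by simp
qed

lemma digit_big: assumes "p > 1" "d \<le> j" shows "digit p d j = 0"
proof -
  have "j < 2 ^ j" by (rule less_exp)
  also have "(2::nat) ^ j \<le> p ^ j" using assms(1) by (intro power_mono) auto
  finally have "j < p ^ j" .
  then have "d < p ^ j" using assms by linarith
  then show ?thesis unfolding digit_def by simp
qed

lemma digits_finite: assumes "p > 1" shows "finite {j. digit p d j \<noteq> 0}"
proof (rule finite_subset[of _ "{..<d}"])
  show "{j. digit p d j \<noteq> 0} \<subseteq> {..<d}"
  proof
    fix j assume "j \<in> {j. digit p d j \<noteq> 0}"
    then show "j \<in> {..<d}" using digit_big[OF assms, of d j] by (cases "d \<le> j") auto
  qed
qed simp

lemma digits_nonempty: assumes "p > 1" "d > 0" shows "{j. digit p d j \<noteq> 0} \<noteq> {}"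
proof
  assume h: "{j. digit p d j \<noteq> 0} = {}"
  have "d < 2 ^ d" by (rule less_exp)
  also have "(2::nat) ^ d \<le> p ^ d" using assms(1) by (intro power_mono) auto
  finally have "d < p ^ d" .
  then have "d = d mod p ^ d" by simp
  also have "\<dots> = 0" using h by (simp flip: digit_sum)
  finally show False using assms by simp
qed

lemma topdig_scale:
  assumes "p > 1" "d > 0"
  shows "topdig p (d * p ^ e) = topdig p d + e"
proof -
  have "{j. digit p (d * p ^ e) j \<noteq> 0} = (\<lambda>j. j + e) ` {j. digit p d j \<noteq> 0}"
  proof (rule set_eqI, rule iffI)
    fix j assume "j \<in> {j. digit p (d * p ^ e) j \<noteq> 0}"
    then have "\<not> j < e" "digit p (d * p ^ e) j \<noteq> 0" using digit_scale_low[of p j e d] assms by auto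
    then show "j \<in> (\<lambda>j. j + e) ` {j. digit p d j \<noteq> 0}"
      using digit_scale_high[of p d e "j - e"] assms
      by (intro image_eqI[of _ _ "j - e"]) auto
  qed (use digit_scale_high assms in auto)
  moreover have "d * p ^ e > 0" using assms by simp
  ultimately show ?thesis
    unfolding topdig_def
    using Max_add_commute[OF digits_finite[OF assms(1)] digits_nonempty[OF assms], of id e] assms
    by simp
qed



lemma lookup_pmap: "f 0 = 0 \<Longrightarrow> Poly_Mapping.lookup (Poly_Mapping.map f b) i = f (Poly_Mapping.lookup b i)"
  by transfer (simp add: when_def)

definition sc :: "nat \<Rightarrow> (nat \<Rightarrow>\<^sub>0 nat) \<Rightarrow> (nat \<Rightarrow>\<^sub>0 nat)" where
  "sc q b = Poly_Mapping.map ((*) q) b"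

lemma lookup_sc [simp]: "Poly_Mapping.lookup (sc q b) i = q * Poly_Mapping.lookup b i"
  unfolding sc_def by (simp add: lookup_pmap)

lemma monom_pow: "(monom b :: 'k::comm_ring_1 mpoly) ^ k = monom (sc k b)"
proof (induction k)
  case 0
  have "sc 0 b = 0" by (rule poly_mapping_eqI) simp
  then show ?case by (simp add: monom_def)
next
  case (Suc k)
  have "b + sc k b = sc (Suc k) b" by (rule poly_mapping_eqI) (simp add: lookup_add)
  then show ?case using Suc by (simp add: monom_def mult_single)
qed

lemma carry_formula:
  assumes "1 \<le> l" "l \<le> topdig p d"
  shows "carry p n d b l = ((\<Sum>i<n. Poly_Mapping.lookup b i mod p ^ l) - d mod p ^ l) div p ^ l"
  using assms unfolding carry_def by (simp add: digit_sum)

lemma keys_sub_lookup: "Poly_Mapping.keys b \<subseteq> {..<n} \<Longrightarrow> \<not> i < n \<Longrightarrow> Poly_Mapping.lookup b i = 0"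
  by (auto simp: in_keys_iff)

lemma carry_shift:
  assumes p: "p > 1" and d: "d > 0" and l: "1 \<le> l" "l \<le> topdig p d"
  shows "carry p n (d * p ^ e) (sc (p ^ e) b) (l + e) = carry p n d b l"
proof -
  let ?q = "p ^ e"
  have q: "?q > 0" using p by simp
  have t: "l + e \<le> topdig p (d * ?q)" using topdig_scale[OF p d] l by simp
  have pe: "p ^ (l + e) = ?q * p ^ l" by (simp add: power_add mult.commute)
  have m: "(?q * x) mod p ^ (l + e) = ?q * (x mod p ^ l)" for x
    unfolding pe by (rule mod_mult_mult1)
  have m2: "(d * ?q) mod p ^ (l + e) = ?q * (d mod p ^ l)"
    using m[of d] by (simp only: mult.commute)
  have s: "(\<Sum>i<n. Poly_Mapping.lookup (sc ?q b) i mod p ^ (l + e)) = ?q * (\<Sum>i<n. Poly_Mapping.lookup b i mod p ^ l)"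
    by (simp only: lookup_sc m sum_distrib_left)
  have "carry p n (d * ?q) (sc ?q b) (l + e)
      = (?q * (\<Sum>i<n. Poly_Mapping.lookup b i mod p ^ l) - ?q * (d mod p ^ l)) div (?q * p ^ l)"
    using l t by (subst carry_formula) (simp_all only: s m2 pe, simp add: sum_distrib_left)
  also have "\<dots> = ((\<Sum>i<n. Poly_Mapping.lookup b i mod p ^ l) - d mod p ^ l) div p ^ l"
    using q by (simp only: diff_mult_distrib2[symmetric] div_mult_mult1)
  also have "\<dots> = carry p n d b l" using l by (simp add: carry_formula)
  finally show ?thesis .
qed

lemma scale_forward:
  assumes p: "p > 1" and b: "b \<in> deg_monos d n" and c: "carry_le p d (carry p n d b) c"
  shows "sc (p ^ e) b \<in> deg_monos (d * p ^ e) n"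
    and "carry_le p (d * p ^ e) (carry p n (d * p ^ e) (sc (p ^ e) b)) (carry_frob e c)"
proof -
  let ?q = "p ^ e"
  have ks: "Poly_Mapping.keys (sc ?q b) \<subseteq> Poly_Mapping.keys b"
    by (auto simp: in_keys_iff)
  then show "sc (p ^ e) b \<in> deg_monos (d * p ^ e) n"
    using b unfolding deg_monos_def by (auto simp: sum_distrib_right[symmetric] mult.commute)
  show "carry_le p (d * p ^ e) (carry p n (d * p ^ e) (sc (p ^ e) b)) (carry_frob e c)"
    unfolding carry_le_def
  proof (intro allI impI)
    fix l assume l: "1 \<le> l \<and> l \<le> topdig p (d * p ^ e)"
    then have d: "d > 0" by (cases "d = 0") (auto simp: topdig_def)
    show "carry p n (d * p ^ e) (sc (p ^ e) b) l \<le> carry_frob e c l"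
    proof (cases "l \<le> e")
      case True
      have dv: "p ^ l dvd ?q" using True by (simp add: le_imp_power_dvd)
      have "carry p n (d * ?q) (sc ?q b) l = ((\<Sum>i<n. ?q * Poly_Mapping.lookup b i mod p ^ l) - d * ?q mod p ^ l) div p ^ l"
        using l by (simp add: carry_formula)
      also have "\<dots> = 0" using dv by (simp add: dvd_imp_mod_0)
      finally show ?thesis by simp
    next
      case False
      define l' where "l' = l - e"
      have l': "l = l' + e" "1 \<le> l'" using False unfolding l'_def by auto
      have "l' \<le> topdig p d" using l l' topdig_scale[OF p d] by simp
      then have "carry p n (d * ?q) (sc ?q b) l = carry p n d b l'"
        using carry_shift[OF p d l'(2)] l' by simp
      also have "\<dots> \<le> c l'" using c \<open>l' \<le> topdig p d\<close> l' unfolding carry_le_def by blast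
      finally show ?thesis using l' False by (simp add: carry_frob_def)
    qed
  qed
qed



lemma scale_backward:
  assumes p: "p > 1" and e: "e \<ge> 1" and b': "b' \<in> deg_monos (d * p ^ e) n"
    and c: "carry_le p (d * p ^ e) (carry p n (d * p ^ e) b') (carry_frob e c)"
  shows "\<exists>b \<in> deg_monos d n. b' = sc (p ^ e) b \<and> carry_le p d (carry p n d b) c"
proof (cases "d = 0")
  case True
  have "b' = 0"
  proof (rule poly_mapping_eqI)
    fix i show "Poly_Mapping.lookup b' i = Poly_Mapping.lookup 0 i"
      using b' True keys_sub_lookup[of b' n i] unfolding deg_monos_def by (cases "i < n") auto
  qed
  moreover have "sc (p ^ e) 0 = 0" by (rule poly_mapping_eqI) simp
  moreover have "(0 :: nat \<Rightarrow>\<^sub>0 nat) \<in> deg_monos d n" using True by (simp add: deg_monos_def)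
  ultimately show ?thesis using True by (intro bexI[of _ 0]) (auto simp: carry_le_def topdig_def)
next
  case False
  then have d: "d > 0" by simp
  let ?q = "p ^ e"
  have q: "?q > 0" using p by simp
  have ke: "b' \<in> deg_monos (d * ?q) n" using b' by simp
  have kb: "Poly_Mapping.keys b' \<subseteq> {..<n}" and sb: "(\<Sum>i<n. Poly_Mapping.lookup b' i) = d * ?q"
    using b' unfolding deg_monos_def by auto
  have te: "1 \<le> e" "e \<le> topdig p (d * ?q)" using e topdig_scale[OF p d] by auto
  have "carry p n (d * ?q) b' e \<le> carry_frob e c e" using c te unfolding carry_le_def by blast
  then have "carry p n (d * ?q) b' e = 0" by (simp add: carry_frob_def)
  then have "((\<Sum>i<n. Poly_Mapping.lookup b' i mod ?q) - d * ?q mod ?q) div ?q = 0"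
    using te by (simp add: carry_formula)
  then have X1: "(\<Sum>i<n. Poly_Mapping.lookup b' i mod ?q) < ?q" using q p by (auto simp: div_eq_0_iff)
  have "(\<Sum>i<n. Poly_Mapping.lookup b' i mod ?q) mod ?q = (\<Sum>i<n. Poly_Mapping.lookup b' i) mod ?q"
    by (rule mod_sum_eq)
  also have "\<dots> = 0" using sb by simp
  finally have "(\<Sum>i<n. Poly_Mapping.lookup b' i mod ?q) = 0" using X1 by simp
  then have mod0: "Poly_Mapping.lookup b' i mod ?q = 0" for i
    using keys_sub_lookup[OF kb, of i] by (cases "i < n") auto
  define b where "b = Poly_Mapping.map (\<lambda>x. x div ?q) b'"
  have lb: "Poly_Mapping.lookup b i = Poly_Mapping.lookup b' i div ?q" for i
    unfolding b_def by (simp add: lookup_pmap)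
  have eq: "b' = sc ?q b"
  proof (rule poly_mapping_eqI)
    fix i show "Poly_Mapping.lookup b' i = Poly_Mapping.lookup (sc ?q b) i"
      using mod0[of i] by (simp add: lb) (metis mult_div_mod_eq add_0_right)
  qed
  have bdeg: "b \<in> deg_monos d n"
  proof -
    have "Poly_Mapping.keys b \<subseteq> Poly_Mapping.keys b'" by (auto simp: in_keys_iff lb intro: ccontr)
    moreover have "?q * (\<Sum>i<n. Poly_Mapping.lookup b i) = ?q * d"
    proof -
      have "?q * (\<Sum>i<n. Poly_Mapping.lookup b i) = (\<Sum>i<n. Poly_Mapping.lookup (sc ?q b) i)"
        by (simp add: sum_distrib_left)
      also have "\<dots> = d * ?q" using sb eq by simp
      finally show ?thesis by (metis mult.commute)
    qed
    then have "(\<Sum>i<n. Poly_Mapping.lookup b i) = d" using q p by auto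
    ultimately show ?thesis using kb unfolding deg_monos_def by auto
  qed
  have "carry_le p d (carry p n d b) c"
    unfolding carry_le_def
  proof (intro allI impI)
    fix l assume l: "1 \<le> l \<and> l \<le> topdig p d"
    have "carry p n d b l = carry p n (d * ?q) b' (l + e)"
      using carry_shift[OF p d, of l n e b] l eq by simp
    also have "\<dots> \<le> carry_frob e c (l + e)"
      using c l topdig_scale[OF p d] unfolding carry_le_def by simp
    also have "\<dots> = c l" using l by (simp add: carry_frob_def)
    finally show "carry p n d b l \<le> c l" .
  qed
  then show ?thesis using bdeg eq by blast
qed



theorem mainTheorem5:
  fixes B :: "(nat \<times> (nat \<Rightarrow> nat)) set" and n p e :: nat
  assumes "CHAR('k::alg_closed_field) = p" and "p > 0"
    and "B \<subseteq> carry_all n p" and "finite B" and "e \<ge> 1"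
  shows "frob_power n (I_B n p B :: 'k mpoly set) (p ^ e) = I_B n p (frob_set p e B)"
proof -
  let ?q = "p ^ e"
  have pr: "prime p" using prime_CHAR_semidom[where 'a='k] assms(1,2) by simp
  then have p1: "p > 1" using prime_gt_1_nat by blast
  have ofn: "of_nat p = (0 :: 'k mpoly)"
  proof -
    have "of_nat p = Poly_Mapping.single 0 (of_nat p :: 'k)" by simp
    also have "(of_nat p :: 'k) = 0" using assms(1) by (metis of_nat_CHAR)
    finally show ?thesis by simp
  qed
  define S where "S d c = {b \<in> deg_monos d n. carry_le p d (carry p n d b) c}" for d c
  define M where "M = (\<Union>(d, c) \<in> B. (monom ` S d c :: 'k mpoly set))"
  have IBM: "I_B n p B \<subseteq> ideal_gen n M"
  proof -
    have "(\<Union>(d, c) \<in> B. I_cd n p c d) \<subseteq> (ideal_gen n M :: 'k mpoly set)"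
    proof (intro subsetI, elim UN_E, clarsimp)
      fix d c and x :: "'k mpoly" assume dc: "(d, c) \<in> B" and x: "x \<in> I_cd n p c d"
      have "monom ` S d c \<subseteq> (ideal_gen n M :: 'k mpoly set)"
        using dc unfolding M_def by (auto intro!: ideal_gen_base)
      then show "x \<in> ideal_gen n M" using x ideal_gen_sub unfolding I_cd_def S_def by blast
    qed
    then have "I_B n p B \<subseteq> ideal_gen n (ideal_gen n M)" unfolding I_B_def
      by (rule ideal_gen_sub[OF subset_trans]) (rule subsetI, rule ideal_gen_base)
    also have "\<dots> \<subseteq> ideal_gen n M" by (rule ideal_gen_sub) simp
    finally show ?thesis .
  qed
  show ?thesis
  proof
    show "frob_power n (I_B n p B :: 'k mpoly set) ?q \<subseteq> I_B n p (frob_set p e B)"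
      unfolding frob_power_def
    proof -
     have "{f ^ ?q |f. f \<in> (I_B n p B :: 'k mpoly set)} \<subseteq> I_B n p (frob_set p e B)"
     proof clarify
      fix f :: "'k mpoly" assume "f \<in> I_B n p B"
      then have "f \<in> ideal_gen n M" using IBM by blast
      then obtain F h where F: "finite F" "F \<subseteq> M" "\<forall>g\<in>F. h g \<in> polyring n" "f = (\<Sum>g\<in>F. h g * g)"
        unfolding ideal_gen_def by blast
      have "f ^ ?q = (\<Sum>g\<in>F. h g ^ ?q * g ^ ?q)"
        unfolding F(4) frob_sum[OF pr ofn] by (simp add: power_mult_distrib)
      also have "\<dots> \<in> I_B n p (frob_set p e B)"
        unfolding I_B_def[of n p "frob_set p e B"]
      proof (rule ideal_gen_sum, rule ideal_gen_mult)
        fix g assume g: "g \<in> F"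
        then show "h g ^ ?q \<in> polyring n" using F by (auto intro: polyring_power)
        from g F(2) obtain d c b where dc: "(d, c) \<in> B" "b \<in> S d c" "g = monom b"
          unfolding M_def by auto
        have "g ^ ?q = monom (sc ?q b)" using dc by (simp add: monom_pow)
        also have "\<dots> \<in> I_cd n p (carry_frob e c) (d * ?q)"
          unfolding I_cd_def using scale_forward[OF p1, of b d n c e] dc(2) unfolding S_def
          by (auto intro!: ideal_gen_base)
        also have "\<dots> \<subseteq> I_B n p (frob_set p e B)"
          unfolding I_B_def frob_set_def using dc(1) by (auto intro!: ideal_gen_base)
        finally show "g ^ ?q \<in> ideal_gen n (\<Union>(d, c) \<in> frob_set p e B. I_cd n p c d)"
          unfolding I_B_def .
      qed
      finally show "f ^ ?q \<in> I_B n p (frob_set p e B)" .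
     qed
     from this[unfolded I_B_def[of n p "frob_set p e B"]]
     show "ideal_gen n {f ^ ?q |f. f \<in> (I_B n p B :: 'k mpoly set)} \<subseteq> I_B n p (frob_set p e B)"
       unfolding I_B_def[of n p "frob_set p e B"] by (rule ideal_gen_sub)
    qed
  next
    show "I_B n p (frob_set p e B) \<subseteq> frob_power n (I_B n p B :: 'k mpoly set) ?q"
      unfolding I_B_def[of n p "frob_set p e B"] frob_power_def[of n "I_B n p B"]
    proof (rule ideal_gen_sub, intro subsetI, elim UN_E)
      fix x :: "'k mpoly" and dc' assume dc': "dc' \<in> frob_set p e B"
        and x: "x \<in> (case dc' of (d, c) \<Rightarrow> I_cd n p c d)"
      from dc' obtain d c where dc: "(d, c) \<in> B" "dc' = (d * ?q, carry_frob e c)"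
        unfolding frob_set_def by auto
      have "monom ` {b' \<in> deg_monos (d * ?q) n. carry_le p (d * ?q) (carry p n (d * ?q) b') (carry_frob e c)}
          \<subseteq> frob_power n (I_B n p B :: 'k mpoly set) ?q"
      proof clarify
        fix b' assume b': "b' \<in> deg_monos (d * ?q) n"
          "carry_le p (d * ?q) (carry p n (d * ?q) b') (carry_frob e c)"
        obtain b where b: "b \<in> deg_monos d n" "b' = sc ?q b" "carry_le p d (carry p n d b) c"
          using scale_backward[OF p1 assms(5) b'] by blast
        have "(monom b :: 'k mpoly) \<in> I_cd n p c d"
          unfolding I_cd_def using b by (auto intro!: ideal_gen_base)
        then have "(monom b :: 'k mpoly) \<in> I_B n p B"
          unfolding I_B_def using dc(1) by (auto intro!: ideal_gen_base)
        moreover have "(monom b' :: 'k mpoly) = monom b ^ ?q" using b by (simp add: monom_pow)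
        ultimately show "(monom b' :: 'k mpoly) \<in> frob_power n (I_B n p B) ?q"
          unfolding frob_power_def by (auto intro!: ideal_gen_base)
      qed
      note sub = ideal_gen_sub[OF this[unfolded frob_power_def]]
      show "x \<in> ideal_gen n {f ^ ?q |f. f \<in> (I_B n p B :: 'k mpoly set)}"
        using x dc(2) sub unfolding I_cd_def by auto
    qed
  qed
qed


end
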